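(* Let $A, B\in\mathbb{R}^{m\times n}$ with $m < n$, $b\in\mathbb{R}^m$, and $s\in\{-1, 1\}^n$. Let $A = M_A - N_A$ with $\operatorname{rank}(M_A) = m$. (a) Let $1\le p\le\infty$. If $\operatorname{diag}(s)M_A^\dagger b \geq 0$, $\operatorname{diag}(s)M_A^\dagger [N_A\operatorname{diag}(s) + B] \geq 0$ and $\|M_A^\dagger[N_A\operatorname{diag}(s) + B]\|_p< 1$, then there exists a nonnegative solution $y_*$ of the linear system $[A\operatorname{diag}(s)-B]y=b$ such that $x_* = \operatorname{diag}(s)y_*$ is a solution of $Ax-B|x|=b$. (b) If $\operatorname{diag}(s)M_A^\dagger b > 0$ and $\|M_A^\dagger [N_A \operatorname{diag}(s) + B]\|_{\infty} < \gamma/2$, where $\gamma = \dfrac{\min_i |(M_A^\dagger b)_i|}{\max_i |(M_A^\dagger b)_i|}$, then $Ax-B|x|=b$ has infinitely many solutions with the sign pattern $s$.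
   Context: $M^\dagger$ is the Moore–Penrose inverse; $|x|$ is the entrywise absolute value; $\operatorname{diag}(s)$ is the diagonal matrix with diagonal $s$. Vector/matrix inequalities are entrywise. $\|\cdot\|_p$ on matrices is the operator norm induced by the vector $p$-norm. A vector $x$ has sign pattern $s$ if $\operatorname{sign}(x_{(i)})=s_{(i)}$ for all $i$. *)

theory Defs
  imports "HOL-Analysis.Analysis"
begin

definition diagm :: "real^'n \<Rightarrow> real^'n^'n" where
  "diagm s = (\<chi> i j. if i = j then s$i else 0)"

definition vabs :: "real^'n \<Rightarrow> real^'n" where
  "vabs x = (\<chi> i. \<bar>x$i\<bar>)"

definition mp_inverse :: "real^'n^'m \<Rightarrow> real^'m^'n" where
  "mp_inverse M = (THE X. M ** X ** M = M \<and> X ** M ** X = X \<and>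
      transpose (M ** X) = M ** X \<and> transpose (X ** M) = X ** M)"

definition vec_pnorm :: "ereal \<Rightarrow> real^'n \<Rightarrow> real" where
  "vec_pnorm p x = (if p = \<infinity> then Max (range (\<lambda>i. \<bar>x$i\<bar>))
     else (\<Sum>i\<in>UNIV. \<bar>x$i\<bar> powr real_of_ereal p) powr (1 / real_of_ereal p))"

definition mat_pnorm :: "ereal \<Rightarrow> real^'n^'m \<Rightarrow> real" where
  "mat_pnorm p A = Sup {vec_pnorm p (A *v x) | x. vec_pnorm p x = 1}"

end

theory Submission
  imports Defs
begin


lemma p_cases: "1 \<le> (p::ereal) \<Longrightarrow> p = \<infinity> \<or> (\<exists>r. p = ereal r \<and> 1 \<le> r)"
  by (cases p) auto

lemma vp_abs_le:
  fixes x :: "real^'n"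
  assumes "1 \<le> p" shows "\<bar>x$i\<bar> \<le> vec_pnorm p x"
proof -
  consider "p = \<infinity>" | r where "p = ereal r" "1 \<le> r" using p_cases[OF assms] by blast
  then show ?thesis
  proof cases
    case 1 then show ?thesis by (simp add: vec_pnorm_def)
  next
    case 2
    have e: "\<bar>x$i\<bar> = (\<bar>x$i\<bar> powr r) powr (1/r)" using 2 by (simp add: powr_powr)
    have "\<bar>x$i\<bar> powr r \<le> (\<Sum>j\<in>UNIV. \<bar>x$j\<bar> powr r)"
      by (rule member_le_sum) auto
    then have "(\<bar>x$i\<bar> powr r) powr (1/r) \<le> (\<Sum>j\<in>UNIV. \<bar>x$j\<bar> powr r) powr (1/r)"
      using 2 by (intro powr_mono2) auto
    then show ?thesis using 2 e by (simp add: vec_pnorm_def)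
  qed
qed

lemma vp_nonneg: "1 \<le> p \<Longrightarrow> 0 \<le> vec_pnorm p (x::real^'n)"
  using vp_abs_le[of p x] abs_ge_zero order_trans by blast

lemma vp_cong: "(\<And>i. \<bar>x$i\<bar> = \<bar>y$i\<bar>) \<Longrightarrow> vec_pnorm p x = vec_pnorm p y"
  by (simp add: vec_pnorm_def)

lemma vp_mono:
  fixes x y :: "real^'n"
  assumes "1 \<le> p" and le: "\<And>i. \<bar>x$i\<bar> \<le> \<bar>y$i\<bar>" shows "vec_pnorm p x \<le> vec_pnorm p y"
proof -
  consider "p = \<infinity>" | r where "p = ereal r" "1 \<le> r" using p_cases[OF assms(1)] by blast
  then show ?thesis
  proof cases
    case 1
    have "\<bar>x$i\<bar> \<le> Max (range (\<lambda>i. \<bar>y$i\<bar>))" for i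
    proof -
      have "\<bar>y$i\<bar> \<le> Max (range (\<lambda>i. \<bar>y$i\<bar>))" by (rule Max_ge) auto
      then show ?thesis using le[of i] by linarith
    qed
    then show ?thesis using 1 by (simp add: vec_pnorm_def Max_le_iff)
  next
    case 2
    have "(\<Sum>j\<in>UNIV. \<bar>x$j\<bar> powr r) \<le> (\<Sum>j\<in>UNIV. \<bar>y$j\<bar> powr r)"
      using 2 le by (intro sum_mono powr_mono2) auto
    then have "(\<Sum>j\<in>UNIV. \<bar>x$j\<bar> powr r) powr (1/r) \<le> (\<Sum>j\<in>UNIV. \<bar>y$j\<bar> powr r) powr (1/r)"
      using 2 by (intro powr_mono2) (auto intro: sum_nonneg)
    then show ?thesis using 2 by (simp add: vec_pnorm_def)
  qed
qed

lemma vp_scale: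
  fixes x :: "real^'n"
  assumes "1 \<le> p" shows "vec_pnorm p (c *\<^sub>R x) = \<bar>c\<bar> * vec_pnorm p x"
proof -
  consider "p = \<infinity>" | r where "p = ereal r" "1 \<le> r" using p_cases[OF assms(1)] by blast
  then show ?thesis
  proof cases
    case 1
    have m: "mono (\<lambda>t. \<bar>c\<bar> * t)" by (simp add: mono_def mult_left_mono)
    have "range (\<lambda>i. \<bar>(c *\<^sub>R x)$i\<bar>) = (\<lambda>t. \<bar>c\<bar> * t) ` range (\<lambda>i. \<bar>x$i\<bar>)"
      by (auto simp: abs_mult image_image)
    then show ?thesis using 1 mono_Max_commute[OF m, of "range (\<lambda>i. \<bar>x$i\<bar>)"]
      by (simp add: vec_pnorm_def)
  next
    case 2
    have "(\<Sum>j\<in>UNIV. \<bar>(c *\<^sub>R x)$j\<bar> powr r) = \<bar>c\<bar> powr r * (\<Sum>j\<in>UNIV. \<bar>x$j\<bar> powr r)"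
      by (simp add: abs_mult powr_mult sum_distrib_left)
    moreover have "(\<bar>c\<bar> powr r * (\<Sum>j\<in>UNIV. \<bar>x$j\<bar> powr r)) powr (1/r)
       = (\<bar>c\<bar> powr r) powr (1/r) * (\<Sum>j\<in>UNIV. \<bar>x$j\<bar> powr r) powr (1/r)"
      by (rule powr_mult)
    moreover have "(\<bar>c\<bar> powr r) powr (1/r) = \<bar>c\<bar>" using 2 by (simp add: powr_powr)
    ultimately show ?thesis using 2 by (simp add: vec_pnorm_def)
  qed
qed

lemma vp_zero: "1 \<le> p \<Longrightarrow> vec_pnorm p (0::real^'n) = 0"
  using vp_scale[of p 0 "0::real^'n"] by simp

lemma vp_pos: "1 \<le> p \<Longrightarrow> (x::real^'n) \<noteq> 0 \<Longrightarrow> 0 < vec_pnorm p x"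
proof -
  assume "1 \<le> p" "x \<noteq> 0"
  then obtain i where "x$i \<noteq> 0" by (auto simp: vec_eq_iff)
  then show ?thesis using vp_abs_le[OF \<open>1 \<le> p\<close>, of x i] by simp
qed

lemma vp_eq0: "1 \<le> p \<Longrightarrow> vec_pnorm p (x::real^'n) \<le> 0 \<Longrightarrow> x = 0"
  using vp_pos by fastforce

lemma unit_exists: "1 \<le> p \<Longrightarrow> \<exists>v::real^'n. vec_pnorm p v = 1"
proof -
  assume p: "1 \<le> p"
  define v0 :: "real^'n" where "v0 = (\<chi> i. 1)"
  have "v0 \<noteq> 0" by (simp add: v0_def vec_eq_iff)
  then have "0 < vec_pnorm p v0" using vp_pos p by blast
  moreover have "vec_pnorm p ((1 / vec_pnorm p v0) *\<^sub>R v0) = \<bar>1 / vec_pnorm p v0\<bar> * vec_pnorm p v0"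
    by (rule vp_scale[OF p])
  ultimately have "vec_pnorm p ((1 / vec_pnorm p v0) *\<^sub>R v0) = 1" by simp
  then show ?thesis by blast
qed

lemma mp_bdd:
  fixes T :: "real^'n^'m"
  assumes p: "1 \<le> p"
  shows "bdd_above {vec_pnorm p (T *v x) | x. vec_pnorm p x = 1}"
proof -
  define C :: "real^'m" where "C = (\<chi> i. \<Sum>j\<in>UNIV. \<bar>T$i$j\<bar>)"
  have "vec_pnorm p (T *v x) \<le> vec_pnorm p C" if "vec_pnorm p x = 1" for x
  proof (rule vp_mono[OF p])
    fix i
    have "\<bar>(T *v x)$i\<bar> = \<bar>\<Sum>j\<in>UNIV. T$i$j * x$j\<bar>" by (simp add: matrix_vector_mult_def)
    also have "\<dots> \<le> (\<Sum>j\<in>UNIV. \<bar>T$i$j * x$j\<bar>)" by (rule sum_abs)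
    also have "\<dots> \<le> (\<Sum>j\<in>UNIV. \<bar>T$i$j\<bar>)"
    proof (rule sum_mono)
      fix j
      have "\<bar>x$j\<bar> \<le> 1" using vp_abs_le[OF p, of x j] that by simp
      then show "\<bar>T$i$j * x$j\<bar> \<le> \<bar>T$i$j\<bar>" by (simp add: abs_mult mult_left_le)
    qed
    also have "\<dots> = \<bar>C$i\<bar>" by (simp add: C_def sum_nonneg)
    finally show "\<bar>(T *v x)$i\<bar> \<le> \<bar>C$i\<bar>" .
  qed
  then show ?thesis by (auto simp: bdd_above_def)
qed

lemma mp_bound:
  fixes T :: "real^'n^'m"
  assumes p: "1 \<le> p"
  shows "vec_pnorm p (T *v v) \<le> mat_pnorm p T * vec_pnorm p v"
proof (cases "v = 0")
  case True then show ?thesis by (simp add: vp_zero[OF p])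
next
  case False
  let ?n = "vec_pnorm p v"
  have n: "0 < ?n" using vp_pos[OF p False] .
  have u: "vec_pnorm p ((1/?n) *\<^sub>R v) = 1" using vp_scale[OF p, of "1/?n" v] n by simp
  have "vec_pnorm p (T *v ((1/?n) *\<^sub>R v)) \<le> mat_pnorm p T"
    unfolding mat_pnorm_def using u by (intro cSup_upper mp_bdd[OF p]) auto
  moreover have "vec_pnorm p (T *v ((1/?n) *\<^sub>R v)) = vec_pnorm p (T *v v) / ?n"
    using vp_scale[OF p, of "1/?n" "T *v v"] n by (simp add: matrix_vector_mult_scaleR)
  ultimately show ?thesis using n by (simp add: divide_le_eq mult.commute)
qed

lemma mp_nonneg:
  fixes T :: "real^'n^'m"
  assumes p: "1 \<le> p" shows "0 \<le> mat_pnorm p T"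
proof -
  obtain v :: "real^'n" where v: "vec_pnorm p v = 1" using unit_exists[OF p] by blast
  show ?thesis using mp_bound[OF p, of T v] vp_nonneg[OF p, of "T *v v"] v by simp
qed



lemma matrix_sub_ldistrib: "(A::real^'n^'m) ** (B - C) = A ** B - A ** C"
  by (simp add: matrix_matrix_mult_def vec_eq_iff sum_subtractf right_diff_distrib)

lemma gram_inv:
  fixes M :: "real^'n^'m"
  assumes rk: "rank M = CARD('m)"
  shows "\<exists>Gi. (M ** transpose M) ** Gi = mat 1 \<and> Gi ** (M ** transpose M) = mat 1 \<and> transpose Gi = Gi"
proof -
  let ?G = "M ** transpose M"
  have injT: "inj ((*v) (transpose M))"
    using rk by (simp add: full_rank_injective[symmetric] rank_transpose)
  have "v = 0" if "?G *v v = 0" for v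
  proof -
    have "inner v (?G *v v) = inner (transpose M *v v) (transpose M *v v)"
      by (simp add: matrix_vector_mul_assoc[symmetric] dot_lmul_matrix[symmetric])
    then have "transpose M *v v = 0" using that by simp
    then show "v = 0" using injT by (metis inj_eq matrix_vector_mult_0_right)
  qed
  then obtain Gi where l: "Gi ** ?G = mat 1" using matrix_left_invertible_ker by blast
  then have r: "?G ** Gi = mat 1" using matrix_left_right_inverse by blast
  have "transpose Gi = Gi ** ?G ** transpose Gi" using l by simp
  also have "\<dots> = Gi ** transpose (Gi ** ?G)"
    by (simp add: matrix_transpose_mul matrix_mul_assoc)
  also have "\<dots> = Gi" using l by simp
  finally show ?thesis using l r by blast
qed

definition penrose :: "real^'n^'m \<Rightarrow> real^'m^'n \<Rightarrow> bool" where
  "penrose M X \<longleftrightarrow> M ** X ** M = M \<and> X ** M ** X = X \<and>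
      transpose (M ** X) = M ** X \<and> transpose (X ** M) = X ** M"

lemma mp_right:
  fixes M :: "real^'n^'m"
  assumes rk: "rank M = CARD('m)"
  shows "M ** mp_inverse M = mat 1"
proof -
  obtain R where MR: "M ** R = mat 1"
    using rk full_rank_surjective matrix_right_invertible_surjective by blast
  obtain Gi where r: "(M ** transpose M) ** Gi = mat 1" and l: "Gi ** (M ** transpose M) = mat 1"
     and sym: "transpose Gi = Gi" using gram_inv[OF rk] by blast
  define X0 where "X0 = transpose M ** Gi"
  have MX0: "M ** X0 = mat 1" using r by (simp add: X0_def matrix_mul_assoc)
  have P0: "penrose M X0"
    unfolding penrose_def
  proof (intro conjI)
    show "M ** X0 ** M = M" using MX0 by simp
    show "X0 ** M ** X0 = X0" using MX0 by (simp add: matrix_mul_assoc[symmetric])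
    show "transpose (M ** X0) = M ** X0" using MX0 by simp
    show "transpose (X0 ** M) = X0 ** M"
      by (simp add: X0_def matrix_transpose_mul sym matrix_mul_assoc)
  qed
  have MX: "M ** X = mat 1" if "penrose M X" for X
  proof -
    have "M ** X ** M ** R = M ** R" using that by (simp add: penrose_def)
    then show ?thesis using MR by (simp add: matrix_mul_assoc[symmetric])
  qed
  have form: "X = transpose M ** (transpose X ** X)" if "penrose M X" for X
  proof -
    have "X = (X ** M) ** X" using that by (simp add: penrose_def)
    also have "\<dots> = transpose (X ** M) ** X" using that by (simp add: penrose_def)
    also have "\<dots> = transpose M ** (transpose X ** X)"
      by (simp add: matrix_transpose_mul matrix_mul_assoc)
    finally show ?thesis .
  qed
  have uniq: "X = X0" if "penrose M X" for X
  proof -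
    define W where "W = transpose X ** X - transpose X0 ** X0"
    have Z: "X - X0 = transpose M ** W"
      using form[OF that] form[OF P0] by (simp add: W_def matrix_sub_ldistrib)
    have "M ** (X - X0) = 0" using MX[OF that] MX0 by (simp add: matrix_sub_ldistrib)
    then have "(M ** transpose M) ** W = 0" using Z by (simp add: matrix_mul_assoc)
    then have "Gi ** ((M ** transpose M) ** W) = 0" by simp
    then have "W = 0" using l by (simp add: matrix_mul_assoc)
    then show ?thesis using Z by simp
  qed
  have e: "mp_inverse M = (THE X. penrose M X)" by (simp add: mp_inverse_def penrose_def)
  have "mp_inverse M = X0" unfolding e
    by (rule the_equality[where P="penrose M", OF P0 uniq])
  then show ?thesis using MX0 by simp
qed


lemma diag_comp: "(diagm s *v u)$i = s$i * u$i"
proof -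
  have "(diagm s *v u)$i = (\<Sum>j\<in>UNIV. (if i = j then s$i else 0) * u$j)"
    by (simp add: matrix_vector_mult_def diagm_def)
  also have "\<dots> = (\<Sum>j\<in>UNIV. (if i = j then s$i * u$j else 0))"
    by (rule sum.cong) auto
  also have "\<dots> = s$i * u$i" by (simp add: sum.delta)
  finally show ?thesis .
qed


theorem theorem3p6:
  fixes A B M_A N_A :: "real^'n^'m" and b :: "real^'m" and s :: "real^'n"
  assumes mn: "CARD('m) < CARD('n)"
    and s_sign: "\<forall>i. s$i = 1 \<or> s$i = -1"
    and split: "A = M_A - N_A"
    and rk: "rank M_A = CARD('m)"
  shows
    "(\<forall>p::ereal. 1 \<le> p \<longrightarrow>
        (\<forall>i. (diagm s *v (mp_inverse M_A *v b))$i \<ge> 0) \<longrightarrow>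
        (\<forall>i j. (diagm s ** mp_inverse M_A ** (N_A ** diagm s + B))$i$j \<ge> 0) \<longrightarrow>
        mat_pnorm p (mp_inverse M_A ** (N_A ** diagm s + B)) < 1 \<longrightarrow>
        (\<exists>y. (\<forall>i. y$i \<ge> 0) \<and> (A ** diagm s - B) *v y = b \<and>
             A *v (diagm s *v y) - B *v vabs (diagm s *v y) = b))
   \<and>
    ((\<forall>i. (diagm s *v (mp_inverse M_A *v b))$i > 0) \<longrightarrow>
     mat_pnorm \<infinity> (mp_inverse M_A ** (N_A ** diagm s + B)) <
       (Min (range (\<lambda>i. \<bar>(mp_inverse M_A *v b)$i\<bar>)) /
        Max (range (\<lambda>i. \<bar>(mp_inverse M_A *v b)$i\<bar>))) / 2 \<longrightarrow>
     infinite {x. A *v x - B *v vabs x = b \<and> (\<forall>i. sgn (x$i) = s$i)})"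
proof -
  define D where "D = diagm s"
  define P where "P = mp_inverse M_A"
  define Q where "Q = N_A ** D + B"
  define c where "c = P *v b"
  define T where "T = P ** Q"
  define K where "K = D ** P ** Q"
  have ss: "s$i * s$i = 1" for i using s_sign by (metis mult_1 mult_minus1 minus_minus)
  have abs_s: "\<bar>s$i\<bar> = 1" for i using s_sign by (metis abs_1 abs_minus_cancel)
  have DD: "D *v (D *v u) = u" for u
    by (simp add: vec_eq_iff D_def diag_comp mult.assoc[symmetric] ss)
  have Kv: "K *v v = D *v (T *v v)" for v
    by (simp add: K_def T_def matrix_vector_mul_assoc matrix_mul_assoc)
  have normK: "vec_pnorm p (K *v v) = vec_pnorm p (T *v v)" for p v
    unfolding Kv by (rule vp_cong) (simp add: D_def diag_comp abs_mult abs_s)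
  have MP: "M_A ** P = mat 1" using mp_right[OF rk] by (simp add: P_def)
  have solve: "(A ** D - B) *v y = b" if y: "y = D *v c + K *v y" for y
  proof -
    have Dy: "D *v y = c + T *v y"
    proof -
      have "D *v y = D *v (D *v c) + D *v (D *v (T *v y))"
        using y Kv by (metis matrix_vector_right_distrib)
      then show ?thesis using DD by simp
    qed
    have Mc: "M_A *v c = b" by (simp add: c_def matrix_vector_mul_assoc MP)
    have MT: "M_A *v (T *v y) = Q *v y"
    proof -
      have "M_A *v (T *v y) = (M_A ** (P ** Q)) *v y" by (simp add: T_def matrix_vector_mul_assoc)
      also have "\<dots> = Q *v y" by (simp add: matrix_mul_assoc MP)
      finally show ?thesis .
    qed
    have "(A ** D - B) *v y = A *v (D *v y) - B *v y"
      by (simp add: matrix_vector_mult_diff_rdistrib matrix_vector_mul_assoc)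
    also have "\<dots> = M_A *v (D *v y) - N_A *v (D *v y) - B *v y"
      by (simp add: split matrix_vector_mult_diff_rdistrib)
    also have "M_A *v (D *v y) = b + Q *v y"
      by (simp add: Dy matrix_vector_right_distrib Mc MT)
    also have "Q *v y = N_A *v (D *v y) + B *v y"
      by (simp add: Q_def matrix_vector_mult_add_rdistrib matrix_vector_mul_assoc)
    finally show ?thesis by simp
  qed
  have exist: "\<exists>y. y = D *v c + K *v y" if p: "1 \<le> p" and q: "mat_pnorm p T < 1" for p
  proof -
    have "\<forall>v. (mat 1 - K) *v v = 0 \<longrightarrow> v = 0"
    proof (intro allI impI)
      fix v assume "(mat 1 - K) *v v = 0"
      then have v: "v = K *v v" by (simp add: matrix_vector_mult_diff_rdistrib)
      have "vec_pnorm p v \<le> mat_pnorm p T * vec_pnorm p v"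
        using mp_bound[OF p, of T v] normK[of p v] v by simp
      moreover have "0 \<le> vec_pnorm p v" by (rule vp_nonneg[OF p])
      ultimately have "vec_pnorm p v \<le> 0"
      proof -
        assume a1: "vec_pnorm p v \<le> mat_pnorm p T * vec_pnorm p v"
        show ?thesis
        proof (rule ccontr)
          assume "\<not> vec_pnorm p v \<le> 0"
          then have "mat_pnorm p T * vec_pnorm p v < 1 * vec_pnorm p v"
            using q by (intro mult_strict_right_mono) auto
          then show False using a1 by simp
        qed
      qed
      then show "v = 0" by (rule vp_eq0[OF p])
    qed
    then obtain Bi where "Bi ** (mat 1 - K) = mat 1" using matrix_left_invertible_ker by blast
    then have R: "(mat 1 - K) ** Bi = mat 1" using matrix_left_right_inverse by blast
    define y where "y = Bi *v (D *v c)"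
    have "(mat 1 - K) *v y = D *v c" unfolding y_def matrix_vector_mul_assoc[of "mat 1 - K" Bi] R by simp
    then have "y - K *v y = D *v c" by (simp add: matrix_vector_mult_diff_rdistrib)
    then have "y = D *v c + K *v y" by (simp add: diff_eq_eq)
    then show ?thesis by blast
  qed
  have partA: "\<exists>y. (\<forall>i. y$i \<ge> 0) \<and> (A ** D - B) *v y = b \<and>
             A *v (D *v y) - B *v vabs (D *v y) = b"
    if p: "1 \<le> p" and hc: "\<forall>i. (D *v c)$i \<ge> 0" and hK: "\<forall>i j. K$i$j \<ge> 0"
      and q: "mat_pnorm p T < 1" for p
  proof -
    obtain y where y: "y = D *v c + K *v y" using exist[OF p q] by blast
    define qq where "qq = mat_pnorm p T"
    have qq0: "0 \<le> qq" unfolding qq_def by (rule mp_nonneg[OF p])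
    define u where "u k = ((\<lambda>v. D *v c + K *v v) ^^ k) 0" for k
    have Kpos: "0 \<le> (K *v v)$i" if "\<forall>j. 0 \<le> v$j" for v i
      using hK that by (simp add: matrix_vector_mult_def sum_nonneg)
    have upos: "\<forall>i. 0 \<le> u k $ i" for k
    proof (induction k)
      case 0 then show ?case by (simp add: u_def)
    next
      case (Suc k)
      have "u (Suc k) = D *v c + K *v u k" by (simp add: u_def)
      then show ?case using Suc hc Kpos by simp
    qed
    have err: "vec_pnorm p (y - u k) \<le> qq^k * vec_pnorm p y" for k
    proof (induction k)
      case 0 then show ?case by (simp add: u_def)
    next
      case (Suc k)
      have e1: "u (Suc k) = D *v c + K *v u k" by (simp add: u_def)
      have e2: "D *v c + K *v y - (D *v c + K *v u k) = K *v (y - u k)"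
        by (simp add: matrix_vector_mult_diff_distrib)
      have "y - u (Suc k) = D *v c + K *v y - (D *v c + K *v u k)"
        unfolding e1 by (rule arg_cong2[where f=minus, OF y refl])
      then have "y - u (Suc k) = K *v (y - u k)" using e2 by simp
      then have "vec_pnorm p (y - u (Suc k)) = vec_pnorm p (T *v (y - u k))" using normK by simp
      also have "\<dots> \<le> qq * vec_pnorm p (y - u k)" unfolding qq_def by (rule mp_bound[OF p])
      also have "\<dots> \<le> qq * (qq^k * vec_pnorm p y)" using Suc qq0 by (rule mult_left_mono)
      finally show ?case by simp
    qed
    have ynn: "0 \<le> y$i" for i
    proof (rule ccontr)
      assume neg: "\<not> 0 \<le> y$i"
      have ny: "0 < vec_pnorm p y" using vp_abs_le[OF p, of y i] neg by simp
      obtain k where k: "qq^k < (- y$i) / vec_pnorm p y"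
      proof -
        have "0 < (- y$i) / vec_pnorm p y" using neg ny by (intro divide_pos_pos) auto
        moreover have "qq < 1" using q qq_def by simp
        ultimately show ?thesis using real_arch_pow_inv that by blast
      qed
      have "\<bar>(y - u k)$i\<bar> \<le> qq^k * vec_pnorm p y"
        using vp_abs_le[OF p, of "y - u k" i] err[of k] by simp
      also have "\<dots> < - y$i" using mult_strict_right_mono[OF k ny] ny by simp
      finally have "\<bar>y$i - u k $i\<bar> < - y$i" by simp
      moreover have "0 \<le> u k $ i" using upos[of k] by blast
      ultimately show False by linarith
    qed
    have vy: "vabs (D *v y) = y"
      by (simp add: vec_eq_iff vabs_def D_def diag_comp abs_mult abs_s ynn)
    have "A *v (D *v y) - B *v y = b"
      using solve[OF y] by (simp add: matrix_vector_mult_diff_rdistrib matrix_vector_mul_assoc)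
    then show ?thesis using ynn solve[OF y] vy by (intro exI[of _ y]) simp
  qed
  show ?thesis
  proof (intro conjI allI impI)
    fix p :: ereal
    assume p: "1 \<le> p" and hc: "\<forall>i. (diagm s *v (mp_inverse M_A *v b))$i \<ge> 0"
      and hK: "\<forall>i j. (diagm s ** mp_inverse M_A ** (N_A ** diagm s + B))$i$j \<ge> 0"
      and q: "mat_pnorm p (mp_inverse M_A ** (N_A ** diagm s + B)) < 1"
    show "\<exists>y. (\<forall>i. y$i \<ge> 0) \<and> (A ** diagm s - B) *v y = b \<and>
             A *v (diagm s *v y) - B *v vabs (diagm s *v y) = b"
      using partA[OF p] hc hK q by (simp add: D_def P_def Q_def c_def T_def K_def)
  next
    assume hc: "\<forall>i. (diagm s *v (mp_inverse M_A *v b))$i > 0"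
      and q: "mat_pnorm \<infinity> (mp_inverse M_A ** (N_A ** diagm s + B)) <
       (Min (range (\<lambda>i. \<bar>(mp_inverse M_A *v b)$i\<bar>)) /
        Max (range (\<lambda>i. \<bar>(mp_inverse M_A *v b)$i\<bar>))) / 2"
    have p: "1 \<le> (\<infinity>::ereal)" by simp
    define qq where "qq = mat_pnorm \<infinity> T"
    define mnc where "mnc = Min (range (\<lambda>i. \<bar>c$i\<bar>))"
    define mxc where "mxc = Max (range (\<lambda>i. \<bar>c$i\<bar>))"
    have hc': "0 < (D *v c)$i" for i using hc by (simp add: D_def c_def P_def)
    have absc: "\<bar>c$i\<bar> = (D *v c)$i" for i
      using hc'[of i] s_sign[rule_format, of i] by (auto simp: D_def diag_comp)
    have qlt: "qq < mnc / mxc / 2" using q by (simp add: qq_def mnc_def mxc_def T_def P_def Q_def c_def D_def)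
    have qq0: "0 \<le> qq" unfolding qq_def by (rule mp_nonneg[OF p])
    have mnc_in: "mnc \<in> range (\<lambda>i. \<bar>c$i\<bar>)" unfolding mnc_def by (rule Min_in) auto
    have mnc_pos: "0 < mnc" using mnc_in absc hc' by auto
    have mnc_le: "mnc \<le> \<bar>c$i\<bar>" for i unfolding mnc_def by (rule Min_le) auto
    have mxc_ge: "\<bar>c$i\<bar> \<le> mxc" for i unfolding mxc_def by (rule Max_ge) auto
    have mm: "mnc \<le> mxc" using mnc_le mxc_ge by (meson order_trans)
    have mxc_pos: "0 < mxc" using mm mnc_pos by simp
    have q2: "2 * qq * mxc < mnc" using qlt mxc_pos by (simp add: field_simps)
    have q1: "qq < 1"
    proof -
      have "2 * qq * mxc < 2 * mxc" using q2 mm mxc_pos by linarith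
      then show ?thesis using mxc_pos by simp
    qed
    obtain y where y: "y = D *v c + K *v y" using exist[OF p] q1 qq_def by blast
    define Y where "Y = vec_pnorm \<infinity> y"
    have Ky: "\<bar>(K *v y)$i\<bar> \<le> qq * Y" for i
    proof -
      have "\<bar>(K *v y)$i\<bar> \<le> vec_pnorm \<infinity> (K *v y)" by (rule vp_abs_le[OF p])
      also have "\<dots> = vec_pnorm \<infinity> (T *v y)" by (rule normK)
      also have "\<dots> \<le> qq * Y" unfolding qq_def Y_def by (rule mp_bound[OF p])
      finally show ?thesis .
    qed
    have yc: "y$i = (D *v c)$i + (K *v y)$i" for i
      using arg_cong[OF y, of "\<lambda>v. v$i"] by simp
    have "\<bar>y$i\<bar> \<le> mxc + qq * Y" for i
      using yc[of i] absc[of i] mxc_ge[of i] Ky[of i] by linarith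
    then have Yb: "Y \<le> mxc + qq * Y" unfolding Y_def vec_pnorm_def by (simp add: Max_le_iff)
    have qY: "qq * Y < mnc"
    proof (rule ccontr)
      assume "\<not> qq * Y < mnc"
      then have h: "mnc \<le> qq * Y" by simp
      have "mnc * (1 - qq) \<le> qq * Y * (1 - qq)" using h q1 by (intro mult_right_mono) auto
      also have "\<dots> = qq * (Y * (1 - qq))" by simp
      also have "\<dots> \<le> qq * mxc" using Yb qq0 by (intro mult_left_mono) (auto simp: algebra_simps)
      finally have "mnc \<le> qq * (mxc + mnc)" by (simp add: algebra_simps)
      also have "\<dots> \<le> 2 * qq * mxc"
      proof -
        have "qq * (mxc + mnc) \<le> qq * (2 * mxc)" using mm qq0 by (intro mult_left_mono) auto
        then show ?thesis by simp
      qed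
      finally show False using q2 by simp
    qed
    have ypos: "0 < y$i" for i
      using yc[of i] absc[of i] mnc_le[of i] Ky[of i] qY by linarith
    have "\<not> inj ((*v) (A ** D - B))"
      using rank_bound[of "A ** D - B"] mn full_rank_injective[of "A ** D - B"] by linarith
    then obtain k where k0: "k \<noteq> 0" and kk: "(A ** D - B) *v k = 0"
      using matrix_left_invertible_ker matrix_left_invertible_injective by blast
    define ym where "ym = Min (range (\<lambda>i. y$i))"
    have ym_pos: "0 < ym"
    proof -
      have "ym \<in> range (\<lambda>i. y$i)" unfolding ym_def by (rule Min_in) auto
      then show ?thesis using ypos by auto
    qed
    have ym_le: "ym \<le> y$i" for i unfolding ym_def by (rule Min_le) auto
    define eps where "eps = ym / (norm k + 1)"
    have eps_pos: "0 < eps" using ym_pos by (simp add: eps_def add_nonneg_pos)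
    define f where "f t = D *v (y + t *\<^sub>R k)" for t
    have fin: "f t \<in> {x. A *v x - B *v vabs x = b \<and> (\<forall>i. sgn (x$i) = s$i)}"
      if t: "t \<in> {0<..<eps}" for t
    proof -
      let ?z = "y + t *\<^sub>R k"
      have zpos: "0 < ?z$i" for i
      proof -
        have "t * \<bar>k$i\<bar> \<le> t * norm k" using t by (intro mult_left_mono) (auto simp: component_le_norm_cart)
        also have "\<dots> \<le> eps * norm k" using t by (intro mult_right_mono) auto
        also have "\<dots> < eps * (norm k + 1)" using eps_pos by simp
        also have "\<dots> = ym"
        proof -
          have "norm k + 1 \<noteq> 0" by (smt (verit) norm_ge_zero)
          then show ?thesis by (simp add: eps_def)
        qed
        finally have "t * \<bar>k$i\<bar> < ym" .
        moreover have "- (t * \<bar>k$i\<bar>) \<le> t * k$i"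
        proof -
          have "t * (- \<bar>k$i\<bar>) \<le> t * k$i" using t by (intro mult_left_mono) auto
          then show ?thesis by simp
        qed
        ultimately show ?thesis using ym_le[of i] by simp
      qed
      have sol: "(A ** D - B) *v ?z = b"
        using solve[OF y] kk by (simp add: matrix_vector_right_distrib matrix_vector_mult_scaleR)
      have va: "vabs (f t) = ?z"
        using zpos by (simp add: f_def vec_eq_iff vabs_def D_def diag_comp abs_mult abs_s less_imp_le)
      have "A *v f t - B *v vabs (f t) = b"
        using sol unfolding va by (simp add: f_def matrix_vector_mult_diff_rdistrib matrix_vector_mul_assoc)
      moreover have "sgn (f t $ i) = s$i" for i
        using zpos[of i] s_sign[rule_format, of i] by (auto simp: f_def D_def diag_comp sgn_mult)
      ultimately show ?thesis by simp
    qed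
    have "inj_on f {0<..<eps}"
    proof (rule inj_onI)
      fix t t' assume "f t = f t'"
      then have "D *v (D *v (y + t *\<^sub>R k)) = D *v (D *v (y + t' *\<^sub>R k))" by (simp add: f_def)
      then have "(t - t') *\<^sub>R k = 0" by (simp add: DD algebra_simps)
      then show "t = t'" using k0 by simp
    qed
    then have "infinite (f ` {0<..<eps})" using eps_pos by (simp add: finite_image_iff)
    moreover have "f ` {0<..<eps} \<subseteq> {x. A *v x - B *v vabs x = b \<and> (\<forall>i. sgn (x$i) = s$i)}"
      using fin by blast
    ultimately show "infinite {x. A *v x - B *v vabs x = b \<and> (\<forall>i. sgn (x$i) = s$i)}"
      using infinite_super by blast
  qed
qed

end
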